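(* Let $\alpha>0$ and $G:=\delta_{\bar B(0,\alpha)}$ on $\mathbb{R}^n$, the indicator function of the closed Euclidean ball of radius $\alpha$ centred at $0$. Let $(x^*,q^* )\in\operatorname{graph}\partial G$. Define $\gamma:=\|q^*\|/(2\alpha)$ if $q^*\neq0$; if $q^*=0$, let $\gamma\ge0$ be arbitrary. Then for all $x\in\bar B(0,\alpha)$ and all $q\in\partial G(x)$, \[ \inf_{\bar x\in(\partial G)^{-1}(q^* )}\langle q-q^*,x-\bar x\rangle\ge\gamma\operatorname{dist}^2(x,(\partial G)^{-1}(q^* )), \] i.e. $\partial G$ is $(I,\gamma I)$-strongly submonotone at $(x^*,q^* )$ with neighbourhood $\operatorname{dom}G=\bar B(0,\alpha)$.
   Context: $\partial G$ is the convex subdifferential (normal cone of the ball); $(\partial G)^{-1}(q^* )=\{x:q^*\in\partial G(x)\}$; $\operatorname{dist}(x,A)=\inf_{a\in A}\|x-a\|$. *)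

theory Defs
  imports "HOL-Analysis.Analysis"
begin

definition ind_fun :: "'a set \<Rightarrow> 'a \<Rightarrow> ereal" where
  "ind_fun C x = (if x \<in> C then 0 else \<infinity>)"

definition subdiff :: "('a::real_inner \<Rightarrow> ereal) \<Rightarrow> 'a \<Rightarrow> 'a set" where
  "subdiff f x = {q. \<bar>f x\<bar> \<noteq> \<infinity> \<and> (\<forall>y. f x + ereal (q \<bullet> (y - x)) \<le> f y)}"

end

theory Submission
  imports Defs
begin

lemma subdiff_ind:
  "q \<in> subdiff (ind_fun C) x \<longleftrightarrow> x \<in> C \<and> (\<forall>y\<in>C. q \<bullet> (y - x) \<le> 0)"
  unfolding subdiff_def ind_fun_def
  by (auto split: if_splits simp: zero_ereal_def[symmetric])

lemma key:
  fixes \<alpha> \<gamma> :: real and z x q qs :: "'a::real_inner"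
  assumes a: "\<alpha> > 0"
    and g1: "qs \<noteq> 0 \<Longrightarrow> \<gamma> = norm qs / (2 * \<alpha>)"
    and z: "norm z \<le> \<alpha>" "\<forall>y. norm y \<le> \<alpha> \<longrightarrow> qs \<bullet> (y - z) \<le> 0"
    and x: "norm x \<le> \<alpha>" "\<forall>y. norm y \<le> \<alpha> \<longrightarrow> q \<bullet> (y - x) \<le> 0"
    and qs: "qs \<noteq> 0"
  shows "(q - qs) \<bullet> (x - z) \<ge> \<gamma> * (norm (x - z))\<^sup>2"
proof -
  define z0 where "z0 = (\<alpha> / norm qs) *\<^sub>R qs"
  have nqs: "norm qs > 0" using qs by simp
  have nz0: "norm z0 = \<alpha>" using a nqs by (simp add: z0_def)
  have qz0: "qs \<bullet> z0 = \<alpha> * norm qs"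
    using nqs by (simp add: z0_def inner_commute power2_norm_eq_inner[symmetric] power2_eq_square)
  have "qs \<bullet> (z0 - z) \<le> 0" using z(2) nz0 by simp
  hence c1: "qs \<bullet> z \<ge> \<alpha> * norm qs" using qz0 by (simp add: inner_diff_right)
  have c2: "qs \<bullet> z \<le> norm qs * norm z" by (rule order_trans[OF _ norm_cauchy_schwarz]) simp
  have qz: "qs \<bullet> z = \<alpha> * norm qs" 
  proof -
    have "norm qs * norm z \<le> norm qs * \<alpha>" using z(1) nqs by (intro mult_left_mono) auto
    thus ?thesis using c1 c2 by (simp add: mult.commute)
  qed
  have "(norm (z - z0))\<^sup>2 = (norm z)\<^sup>2 - 2 * (z \<bullet> z0) + (norm z0)\<^sup>2"
    by (simp add: power2_norm_eq_inner inner_diff_left inner_diff_right inner_commute)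
  also have "z \<bullet> z0 = \<alpha> * \<alpha>"
    using qz nqs by (simp add: z0_def inner_commute)
  finally have "(norm (z - z0))\<^sup>2 \<le> 0" using nz0 z(1) a
    by (smt (verit, best) power2_eq_square mult_mono norm_ge_zero)
  hence zz: "z = z0" by simp
  have "q \<bullet> (z - x) \<le> 0" using x z by simp
  hence h1: "q \<bullet> (x - z) \<ge> 0" by (simp add: inner_diff_right)
  have h2: "- (qs \<bullet> (x - z)) = \<alpha> * norm qs - qs \<bullet> x" using qz by (simp add: inner_diff_right)
  have xz: "x \<bullet> z = (\<alpha> / norm qs) * (qs \<bullet> x)" by (simp add: zz z0_def inner_commute)
  have "(norm (x - z))\<^sup>2 = (norm x)\<^sup>2 - 2 * (x \<bullet> z) + (norm z)\<^sup>2"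
    by (simp add: power2_norm_eq_inner inner_diff_left inner_diff_right inner_commute)
  also have "\<dots> \<le> 2 * \<alpha>^2 - 2 * (x \<bullet> z)" using x(1) z(1)
    by (smt (verit) norm_ge_zero power_mono)
  finally have n: "(norm (x - z))\<^sup>2 \<le> 2 * \<alpha>^2 - 2 * (x \<bullet> z)" .
  have "\<gamma> * (norm (x - z))\<^sup>2 \<le> \<gamma> * (2 * \<alpha>^2 - 2 * (x \<bullet> z))"
    using n g1 qs a by (intro mult_left_mono) auto
  also have "\<dots> = \<alpha> * norm qs - qs \<bullet> x"
  proof -
    have e: "\<alpha> * (\<gamma> * 2) = norm qs" using g1[OF qs] a by (simp add: field_simps)
    have e2: "norm qs * (x \<bullet> z) = \<alpha> * (qs \<bullet> x)" using xz nqs by simp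
    have "\<alpha> * (\<gamma> * (2 * (x \<bullet> z))) = \<alpha> * (qs \<bullet> x)"
      using e e2 by (metis mult.assoc)
    hence "\<gamma> * (2 * (x \<bullet> z)) = qs \<bullet> x" using a by simp
    moreover have "\<gamma> * (2 * \<alpha>^2) = \<alpha> * norm qs"
      using g1[OF qs] a by (simp add: field_simps power2_eq_square)
    ultimately show ?thesis by (simp add: right_diff_distrib)
  qed
  finally show ?thesis using h1 h2 by (simp add: inner_diff_left)
qed

theorem lemma5p10:
  fixes \<alpha> \<gamma> :: real and xs qs :: "real ^ 'n"
  assumes "\<alpha> > 0"
    and "qs \<in> subdiff (ind_fun (cball 0 \<alpha>)) xs"
    and "qs \<noteq> 0 \<Longrightarrow> \<gamma> = norm qs / (2 * \<alpha>)"
    and "qs = 0 \<Longrightarrow> \<gamma> \<ge> 0"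
  shows "\<forall>x \<in> cball 0 \<alpha>. \<forall>q \<in> subdiff (ind_fun (cball 0 \<alpha>)) x.
           (INF xb \<in> {z. qs \<in> subdiff (ind_fun (cball 0 \<alpha>)) z}. (q - qs) \<bullet> (x - xb))
             \<ge> \<gamma> * (infdist x {z. qs \<in> subdiff (ind_fun (cball 0 \<alpha>)) z})\<^sup>2"
proof (intro ballI)
  fix x q :: "real^'n"
  assume xb: "x \<in> cball 0 \<alpha>" and qx: "q \<in> subdiff (ind_fun (cball 0 \<alpha>)) x"
  define S where "S = {z. qs \<in> subdiff (ind_fun (cball (0::real^'n) \<alpha>)) z}"
  have ne: "S \<noteq> {}" using assms(2) S_def by auto
  have gam: "\<gamma> \<ge> 0" using assms by (cases "qs = 0") auto
  have xq: "norm x \<le> \<alpha>" "\<forall>y. norm y \<le> \<alpha> \<longrightarrow> q \<bullet> (y - x) \<le> 0"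
    using qx by (auto simp: subdiff_ind)
  have "\<gamma> * (infdist x S)\<^sup>2 \<le> (q - qs) \<bullet> (x - z)" if zS: "z \<in> S" for z
  proof -
    have zq: "norm z \<le> \<alpha>" "\<forall>y. norm y \<le> \<alpha> \<longrightarrow> qs \<bullet> (y - z) \<le> 0"
      using zS by (auto simp: subdiff_ind S_def)
    have d: "infdist x S \<le> norm (x - z)" using zS by (metis infdist_le dist_norm)
    have d0: "infdist x S \<ge> 0" by (rule infdist_nonneg)
    show ?thesis
    proof (cases "qs = 0")
      case True
      hence "x \<in> S" using xb qx by (auto simp: S_def subdiff_ind)
      hence "infdist x S = 0" by simp
      moreover have "q \<bullet> (z - x) \<le> 0" using xq zq by simp
      ultimately show ?thesis using True by (simp add: inner_diff_right)
    next
      case False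
      have "\<gamma> * (infdist x S)\<^sup>2 \<le> \<gamma> * (norm (x - z))\<^sup>2"
        using d d0 gam by (intro mult_left_mono power_mono) auto
      also have "\<dots> \<le> (q - qs) \<bullet> (x - z)"
        by (rule key[OF assms(1) assms(3) zq xq False])
      finally show ?thesis .
    qed
  qed
  thus "(INF xb \<in> {z. qs \<in> subdiff (ind_fun (cball 0 \<alpha>)) z}. (q - qs) \<bullet> (x - xb))
             \<ge> \<gamma> * (infdist x {z. qs \<in> subdiff (ind_fun (cball 0 \<alpha>)) z})\<^sup>2"
    using ne unfolding S_def[symmetric] by (intro cINF_greatest) auto
qed

end
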